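(* Let $p\ge1$, $0<\ell<1/2$ and $B\ge1$. If $s\le 1$, then \[ \Big\|\sum_{n=1}^{\sqrt B}\frac{\sin(\pi n^2\ell)}{n^{2s}}e_{n^2}\Big\|_p\lesssim_s \ell\Big\|\sum_{n=1}^{\sqrt B}n^{2(1-s)}e_{n^2}\Big\|_p+B^{3-s}\ell^3\cosh(2\pi B\ell)\Big\|\sum_{n=1}^{\sqrt B}e_{n^2}\Big\|_p. \] If $1<s\le3$, then \[ \Big\|\sum_{n=1}^{\sqrt B}\frac{\sin(\pi n^2\ell)}{n^{2s}}e_{n^2}\Big\|_p\lesssim \ell\Big\|\sum_{n=1}^{\sqrt B}\frac{e_{n^2}}{n^{2(s-1)}}\Big\|_p+\ell^3\Big\|\sum_{n=1}^{\sqrt B}n^{2(3-s)}e_{n^2}\Big\|_p+B^{5-s}\ell^5\cosh(2\pi\ell B)\Big\|\sum_{n=1}^{\sqrt B}e_{n^2}\Big\|_p. \]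
   Context: $e_m(x)=e^{2\pi i m x}$ on $\mathbb T=\mathbb R/\mathbb Z$, $\|\cdot\|_p$ is the $L^p(\mathbb T)$ norm, and $\sum_{n=1}^{\sqrt B}$ is the sum over integers $1\le n\le\sqrt B$. $\lesssim_s$ means up to a constant depending only on $s$ (independent of $\ell$ and $B$). *)

theory Defs
  imports "HOL-Analysis.Analysis"
begin

text \<open>Characters on the torus R/Z, viewed as 1-periodic functions on the reals.\<close>
definition echar :: "int \<Rightarrow> real \<Rightarrow> complex" where
  "echar m x = exp (2 * of_real pi * \<i> * of_int m * of_real x)"

text \<open>L^p(T) norm, T = R/Z identified with the fundamental domain [0,1] (Lebesgue measure).\<close>
definition Lp_norm_T :: "real \<Rightarrow> (real \<Rightarrow> complex) \<Rightarrow> real" where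
  "Lp_norm_T p f = (LINT x:{0..1}|lborel. cmod (f x) powr p) powr (1 / p)"

definition sqsum :: "real \<Rightarrow> (nat \<Rightarrow> real) \<Rightarrow> real \<Rightarrow> complex" where
  "sqsum B a x = (\<Sum>n\<in>{1..nat \<lfloor>sqrt B\<rfloor>}. of_real (a n) * echar (int (n^2)) x)"

end

theory Submission
  imports Defs
begin


definition Nr :: "real \<Rightarrow> (real \<Rightarrow> real) \<Rightarrow> real" where
  "Nr p g = integral {0..1} (\<lambda>x. g x powr p) powr (1/p)"

lemma powr_integrable:
  fixes g :: "real \<Rightarrow> real"
  assumes "continuous_on {0..1} g" "\<And>x. g x \<ge> 0" "p > 0"
  shows "(\<lambda>x. g x powr p) integrable_on {0..1}"
proof -
  have "continuous_on {0..1} (\<lambda>x. g x powr p)"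
    by (rule continuous_on_powr') (use assms in \<open>auto intro!: continuous_intros\<close>)
  then show ?thesis by (rule integrable_continuous_interval)
qed

lemma Lp_Nr:
  assumes "continuous_on {0..1} f" "p > 0"
  shows "Lp_norm_T p f = Nr p (\<lambda>x. cmod (f x))"
proof -
  have c: "continuous_on {0..1} (\<lambda>x. cmod (f x) powr p)"
    by (rule continuous_on_powr') (use assms in \<open>auto intro!: continuous_intros\<close>)
  show ?thesis
    unfolding Lp_norm_T_def Nr_def
    using set_borel_integral_eq_integral(2)[OF borel_integrable_atLeastAtMost'[OF c]] by simp
qed

lemma Nr_nonneg: "Nr p g \<ge> 0" by (simp add: Nr_def)

lemma Ipow_nonneg:
  fixes g :: "real \<Rightarrow> real"
  assumes "continuous_on {0..1} g" "\<And>x. g x \<ge> 0" "p > 0"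
  shows "integral {0..1} (\<lambda>x. g x powr p) \<ge> 0"
  by (rule integral_nonneg[OF powr_integrable[OF assms]]) auto

lemma Nr_pow:
  assumes "continuous_on {0..1} g" "\<And>x. g x \<ge> 0" "p > 0"
  shows "Nr p g powr p = integral {0..1} (\<lambda>x. g x powr p)"
  using Ipow_nonneg[OF assms] assms(3) unfolding Nr_def
  by (simp add: powr_powr)

lemma Nr_mono:
  assumes "continuous_on {0..1} f" "\<And>x. f x \<ge> 0" "continuous_on {0..1} g" "p > 0"
     and "\<And>x. x \<in> {0..1} \<Longrightarrow> f x \<le> g x" "\<And>x. g x \<ge> 0"
  shows "Nr p f \<le> Nr p g"
  unfolding Nr_def
  apply (rule powr_mono2)
  using assms apply simp
  apply (rule Ipow_nonneg) using assms apply auto[3]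
  apply (rule integral_le)
  apply (rule powr_integrable) using assms apply auto[3]
  apply (rule powr_integrable) using assms apply auto[3]
  using assms by (auto intro!: powr_mono2)

lemma Nr_const:
  assumes "c \<ge> 0" "p > 0"
  shows "Nr p (\<lambda>x. c) = c"
  using assms by (simp add: Nr_def powr_powr)

lemma Nr_scale:
  assumes "continuous_on {0..1} g" "\<And>x. g x \<ge> 0" "p > 0" "c \<ge> 0"
  shows "Nr p (\<lambda>x. c * g x) = c * Nr p g"
proof -
  have "integral {0..1} (\<lambda>x. (c * g x) powr p) = c powr p * integral {0..1} (\<lambda>x. g x powr p)"
    using assms by (simp add: powr_mult)
  then show ?thesis
    using assms Ipow_nonneg[OF assms(1-3)] unfolding Nr_def
    by (simp add: powr_mult powr_powr)
qed

lemma convex_pow2: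
  fixes u v t p :: real
  assumes "0 \<le> t" "t \<le> 1" "0 \<le> u" "0 \<le> v" "p \<ge> 1"
  shows "(t * u + (1 - t) * v) powr p \<le> t * u powr p + (1 - t) * v powr p"
proof (cases "u = 0 \<or> v = 0")
  case True
  have a: "t powr p \<le> t" using assms powr_mono'[of 1 p t] by simp
  have b: "(1-t) powr p \<le> (1-t)" using assms powr_mono'[of 1 p "1-t"] by simp
  show ?thesis
  proof (cases "u = 0")
    case True
    then show ?thesis using b assms
      by (simp add: powr_mult mult_right_mono)
  next
    case False
    then have "v = 0" using \<open>u = 0 \<or> v = 0\<close> by simp
    then show ?thesis using a assms
      by (simp add: powr_mult mult_right_mono)
  qed
next
  case False
  then have "u > 0" "v > 0" using assms by auto
  then show ?thesis
    using powr_convex[OF assms(5)] assms unfolding convex_on_def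
    by auto
qed


lemma Nr_minkowski:
  fixes f g :: "real \<Rightarrow> real"
  assumes "continuous_on {0..1} f" "\<And>x. f x \<ge> 0" "continuous_on {0..1} g" "\<And>x. g x \<ge> 0" "p \<ge> 1"
  shows "Nr p (\<lambda>x. f x + g x) \<le> Nr p f + Nr p g"
proof (rule field_le_epsilon)
  fix e :: real assume e: "e > 0"
  have p0: "p > 0" using assms by simp
  define a where "a = Nr p f + e/2"
  define b where "b = Nr p g + e/2"
  have a0: "a > 0" "b > 0" using e Nr_nonneg[of p f] Nr_nonneg[of p g] by (auto simp: a_def b_def)
  define t where "t = a / (a + b)"
  have t01: "0 \<le> t" "t \<le> 1" using a0 by (auto simp: t_def)
  have pt: "((f x + g x) / (a + b)) powr p \<le> t * (f x / a) powr p + (1 - t) * (g x / b) powr p" for x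
  proof -
    have "1 - t = b / (a + b)" using a0 by (simp add: t_def field_simps)
    then have "(f x + g x) / (a + b) = t * (f x / a) + (1 - t) * (g x / b)"
      using a0 by (simp add: t_def add_divide_distrib)
    then show ?thesis using convex_pow2[OF t01, of "f x / a" "g x / b" p] assms a0 by simp
  qed
  have cf: "continuous_on {0..1} (\<lambda>x. f x + g x)" using assms by (auto intro!: continuous_intros)
  have i1: "integral {0..1} (\<lambda>x. ((f x + g x) / (a + b)) powr p)
       = integral {0..1} (\<lambda>x. (f x + g x) powr p) / (a + b) powr p"
    using a0 assms by (simp add: powr_divide)
  have i2: "integral {0..1} (\<lambda>x. (f x / a) powr p) = Nr p f powr p / a powr p"
    using a0 assms Nr_pow[OF assms(1,2) p0] by (simp add: powr_divide)
  have i3: "integral {0..1} (\<lambda>x. (g x / b) powr p) = Nr p g powr p / b powr p"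
    using a0 assms Nr_pow[OF assms(3,4) p0] by (simp add: powr_divide)
  have r2: "Nr p f powr p / a powr p \<le> 1"
  proof -
    have "Nr p f powr p \<le> a powr p"
      by (rule powr_mono2) (use p0 Nr_nonneg[of p f] e in \<open>auto simp: a_def\<close>)
    then show ?thesis using a0 by simp
  qed
  have r3: "Nr p g powr p / b powr p \<le> 1"
  proof -
    have "Nr p g powr p \<le> b powr p"
      by (rule powr_mono2) (use p0 Nr_nonneg[of p g] e in \<open>auto simp: b_def\<close>)
    then show ?thesis using a0 by simp
  qed
  have int1: "(\<lambda>x. (f x / a) powr p) integrable_on {0..1}"
    using a0 assms by (simp add: powr_divide powr_integrable p0)
  have int2: "(\<lambda>x. (g x / b) powr p) integrable_on {0..1}"
    using a0 assms by (simp add: powr_divide powr_integrable p0)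
  have "integral {0..1} (\<lambda>x. ((f x + g x) / (a + b)) powr p)
     \<le> integral {0..1} (\<lambda>x. t * (f x / a) powr p + (1 - t) * (g x / b) powr p)"
    apply (rule integral_le)
    using a0 assms apply (simp add: powr_divide powr_integrable p0 cf)
    apply (rule integrable_add)
    using integrable_cmul[OF int1, of t] apply simp
    using integrable_cmul[OF int2, of "1-t"] apply simp
    using pt by auto
  also have "\<dots> = t * integral {0..1} (\<lambda>x. (f x / a) powr p) + (1 - t) * integral {0..1} (\<lambda>x. (g x / b) powr p)"
    using int1 int2 integrable_cmul[OF int1, of t] integrable_cmul[OF int2, of "1-t"]
    by (simp add: integral_add integral_mult_right)
  also have "\<dots> \<le> t * 1 + (1 - t) * 1"
    using i2 i3 r2 r3 t01 by (intro add_mono mult_left_mono) auto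
  finally have "integral {0..1} (\<lambda>x. (f x + g x) powr p) \<le> (a + b) powr p"
    using i1 a0 by (simp add: divide_le_eq)
  then have "Nr p (\<lambda>x. f x + g x) \<le> ((a + b) powr p) powr (1/p)"
    unfolding Nr_def using Ipow_nonneg[OF cf _ p0] assms by (auto intro!: powr_mono2)
  also have "\<dots> = a + b" using a0 p0 by (simp add: powr_powr)
  finally show "Nr p (\<lambda>x. f x + g x) \<le> Nr p f + Nr p g + e" by (simp add: a_def b_def)
qed

lemma Nr_sum:
  fixes f :: "'a \<Rightarrow> real \<Rightarrow> real"
  assumes "finite J" "\<And>j. j \<in> J \<Longrightarrow> continuous_on {0..1} (f j)" "\<And>j x. j \<in> J \<Longrightarrow> f j x \<ge> 0" "p \<ge> 1"
  shows "Nr p (\<lambda>x. \<Sum>j\<in>J. f j x) \<le> (\<Sum>j\<in>J. Nr p (f j))"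
  using assms
proof (induction J rule: finite_induct)
  case empty
  then show ?case using Nr_const[of 0 p] by simp
next
  case (insert a J)
  have "Nr p (\<lambda>x. \<Sum>j\<in>insert a J. f j x) = Nr p (\<lambda>x. f a x + (\<Sum>j\<in>J. f j x))"
    using insert by simp
  also have "\<dots> \<le> Nr p (f a) + Nr p (\<lambda>x. \<Sum>j\<in>J. f j x)"
    by (rule Nr_minkowski) (use insert in \<open>auto intro!: continuous_intros sum_nonneg\<close>)
  also have "\<dots> \<le> Nr p (f a) + (\<Sum>j\<in>J. Nr p (f j))"
    using insert by auto
  finally show ?case using insert by simp
qed

lemma shift_integral:
  fixes g :: "real \<Rightarrow> real"
  assumes "continuous_on UNIV g" "\<And>x. g (x + 1) = g x" "0 \<le> u" "u \<le> 1"
  shows "integral {0..1} (\<lambda>x. g (x + u)) = integral {0..1} g"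
proof -
  have ig: "g integrable_on {a..b}" for a b
    by (rule integrable_continuous_interval) (use assms(1) continuous_on_subset in blast)
  have "integral {0..1} (\<lambda>x. g (x + u)) = integral {u..1+u} g"
    using integral_shift_real_ivl[where a=u and c=u and b="1+u" and f=g] by simp
  also have "\<dots> = integral {u..1} g + integral {1..1+u} g"
    using Henstock_Kurzweil_Integration.integral_combine[where a=u and c=1 and b="1+u" and f=g] ig assms by simp
  also have "integral {1..1+u} g = integral {0..u} (\<lambda>x. g (x + 1))"
    using integral_shift_real_ivl[where a=1 and c=1 and b="1+u" and f=g] by simp
  also have "\<dots> = integral {0..u} g" using assms(2) by simp
  also have "integral {u..1} g + integral {0..u} g = integral {0..1} g"
    using Henstock_Kurzweil_Integration.integral_combine[where a=0 and c=u and b=1 and f=g] ig assms by simp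
  finally show ?thesis .
qed


lemma sin_step:
  fixes a h :: real
  assumes "h \<ge> 0"
  shows "\<bar>sin (a + h) - sin a - h * cos a\<bar> \<le> h^2"
proof (cases "h = 0")
  case True then show ?thesis by simp
next
  case False
  then have "a < a + h" using assms by simp
  from MVT2[OF this, of sin cos] obtain z where z: "a < z" "z < a + h" "sin (a + h) - sin a = (a + h - a) * cos z"
    by (auto intro: DERIV_sin)
  have "\<bar>cos z - cos a\<bar> \<le> \<bar>z - a\<bar>"
  proof -
    have "\<bar>cos z - cos a\<bar> = 2 * \<bar>sin ((z + a) / 2)\<bar> * \<bar>sin ((a - z) / 2)\<bar>"
      by (simp add: cos_diff_cos abs_mult)
    also have "\<dots> \<le> 2 * 1 * \<bar>(a - z) / 2\<bar>"
      by (intro mult_mono abs_sin_x_le_abs_x abs_sin_le_one) auto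
    finally show ?thesis by simp
  qed
  then have "\<bar>cos z - cos a\<bar> \<le> h" using z by simp
  then have "\<bar>h * (cos z - cos a)\<bar> \<le> h * h" using assms by (simp add: abs_mult mult_left_mono)
  then show ?thesis using z by (simp add: power2_eq_square algebra_simps)
qed

lemma sin_riemann:
  fixes th :: real and m :: nat
  assumes "m > 0" "th \<ge> 0"
  shows "\<bar>sin th - (th / m) * (\<Sum>j<m. cos (th * j / m))\<bar> \<le> th^2 / m"
proof -
  define h where "h = th / m"
  have h0: "h \<ge> 0" using assms by (simp add: h_def)
  have tel: "sin th = (\<Sum>j<m. sin (h * Suc j) - sin (h * j))"
    using sum_lessThan_telescope[of "\<lambda>j. sin (h * j)" m] assms by (simp add: h_def)
  have c: "(\<Sum>j<m. cos (th * j / m)) = (\<Sum>j<m. cos (h * j))" by (simp add: h_def)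
  have "sin th - h * (\<Sum>j<m. cos (h * j)) = (\<Sum>j<m. sin (h * Suc j) - sin (h * j)) - (\<Sum>j<m. h * cos (h * j))"
    by (simp only: tel sum_distrib_left)
  also have "\<dots> = (\<Sum>j<m. sin (h * j + h) - sin (h * j) - h * cos (h * j))"
  proof -
    have "\<And>j::nat. h * real (Suc j) = h * j + h" by (simp add: algebra_simps)
    then show ?thesis by (simp add: sum_subtractf)
  qed
  also have "\<bar>\<dots>\<bar> \<le> (\<Sum>j<m. h^2)"
    by (rule order.trans[OF sum_abs], rule sum_mono, rule sin_step[OF h0])
  also have "\<dots> = th^2 / m" using assms by (simp add: h_def power2_eq_square)
  finally show ?thesis unfolding c h_def[symmetric] .
qed

lemma echar_shift:
  "echar k (x + u) + echar k (x - u) = 2 * of_real (cos (2 * pi * k * u)) * echar k x"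
proof -
  define t where "t = 2 * pi * k * u"
  have a: "2 * of_real pi * \<i> * of_int k * of_real (x + u) = 2 * of_real pi * \<i> * of_int k * of_real x + \<i> * of_real t"
    by (simp add: t_def ring_distribs mult_ac)
  have b: "2 * of_real pi * \<i> * of_int k * of_real (x - u) = 2 * of_real pi * \<i> * of_int k * of_real x + (- (\<i> * of_real t))"
    by (simp add: t_def ring_distribs mult_ac)
  have c: "exp (\<i> * of_real t) + exp (- (\<i> * of_real t)) = 2 * of_real (cos t)"
    by (simp add: cos_exp_eq cos_of_real[symmetric])
  have "echar k (x + u) + echar k (x - u) = echar k x * (exp (\<i> * of_real t) + exp (- (\<i> * of_real t)))"
    unfolding echar_def a b exp_add by (simp add: ring_distribs)
  also have "\<dots> = 2 * of_real (cos t) * echar k x" unfolding c by simp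
  finally show ?thesis unfolding t_def .
qed

lemma echar_intshift: "echar k (x + of_int j) = echar k x"
proof -
  have e: "2 * of_real pi * \<i> * of_int k * of_real (x + of_int j) = 2 * of_real pi * \<i> * of_int k * of_real x + (2 * of_int (k * j) * pi) * \<i>"
    by (simp add: ring_distribs mult_ac)
  have "echar k (x + of_int j) = echar k x * exp ((2 * of_int (k * j) * pi) * \<i>)"
    unfolding echar_def e by (simp only: exp_add)
  also have "exp ((2 * of_int (k * j) * pi) * \<i>) = 1" by (rule exp_integer_2pi) simp
  finally show ?thesis by simp
qed

lemma sqsum_cont [continuous_intros]: "continuous_on A f \<Longrightarrow> continuous_on A (\<lambda>x. sqsum B b (f x))"
  unfolding sqsum_def echar_def by (intro continuous_intros)

lemma sqsum_intshift: "sqsum B b (x + of_int j) = sqsum B b x"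
  unfolding sqsum_def by (simp add: echar_intshift)

lemma Nr_shift:
  assumes "p > 0"
  shows "Nr p (\<lambda>x. cmod (sqsum B b (x + v))) = Nr p (\<lambda>x. cmod (sqsum B b x))"
proof -
  define g where "g = (\<lambda>x. cmod (sqsum B b x) powr p)"
  have gc: "continuous_on UNIV g" unfolding g_def
    by (rule continuous_on_powr') (use assms in \<open>auto intro!: continuous_intros\<close>)
  have gp: "g (x + 1) = g x" for x using sqsum_intshift[of B b x 1] by (simp add: g_def)
  have fr: "sqsum B b (x + v) = sqsum B b (x + frac v)" for x
    using sqsum_intshift[of B b "x + frac v" "\<lfloor>v\<rfloor>"] by (simp add: frac_def algebra_simps)
  have "integral {0..1} (\<lambda>x. g (x + frac v)) = integral {0..1} g"
    by (rule shift_integral[OF gc gp]) (auto simp: frac_lt_1 less_imp_le)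
  then show ?thesis unfolding Nr_def using fr by (simp add: g_def)
qed

lemma sum_bound_E:
  fixes b :: "nat \<Rightarrow> real" and l :: real and m :: nat
  assumes "l > 0" "m > 0" "n \<ge> 1"
  shows "\<bar>sin (pi * real n ^ 2 * l) / real n ^ 2 - (pi * l / m) * (\<Sum>j<m. cos (pi * real n ^ 2 * l * j / m))\<bar>
         \<le> pi^2 * l^2 * real n ^ 2 / m"
proof -
  define th where "th = pi * real n ^ 2 * l"
  have th0: "th \<ge> 0" using assms by (simp add: th_def)
  have n2: "real n ^ 2 > 0" using assms by simp
  have "sin th / real n ^ 2 - (pi * l / m) * (\<Sum>j<m. cos (th * j / m))
      = (sin th - (th / m) * (\<Sum>j<m. cos (th * j / m))) / real n ^ 2"
    using n2 by (simp add: th_def field_simps)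
  also have "\<bar>\<dots>\<bar> \<le> (th^2 / m) / real n ^ 2"
  proof -
    have "\<bar>(sin th - (th / m) * (\<Sum>j<m. cos (th * j / m))) / real n ^ 2\<bar>
        = \<bar>sin th - (th / m) * (\<Sum>j<m. cos (th * j / m))\<bar> / real n ^ 2"
      using n2 by (simp only: abs_divide)
    also have "\<dots> \<le> (th^2 / m) / real n ^ 2"
      by (rule divide_right_mono[OF sin_riemann[OF assms(2) th0]]) (use n2 in simp)
    finally show ?thesis .
  qed
  also have "\<dots> = pi^2 * l^2 * real n ^ 2 / m"
    using n2 by (simp add: th_def field_simps power2_eq_square)
  finally show ?thesis by (simp add: th_def)
qed


lemma norm_echar [simp]: "cmod (echar k x) = 1"
proof -
  have "echar k x = exp (\<i> * of_real (2 * pi * k * x))"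
    unfolding echar_def by (simp add: mult_ac)
  then show ?thesis by (simp only: norm_exp_i_times)
qed

lemma pointwise:
  fixes b :: "nat \<Rightarrow> real" and l B x :: real and m :: nat
  assumes "l > 0" "m > 0"
  shows "cmod (sqsum B (\<lambda>n. b n * (sin (pi * real n ^ 2 * l) / real n ^ 2)) x)
     \<le> (\<Sum>j<m. pi * l / (2 * m) * cmod (sqsum B b (x + l * j / (2 * m))) + pi * l / (2 * m) * cmod (sqsum B b (x - l * j / (2 * m))))
        + pi^2 * l^2 * (\<Sum>n\<in>{1..nat \<lfloor>sqrt B\<rfloor>}. \<bar>b n\<bar> * real n ^ 2) / m"
proof -
  define S where "S = {1..nat \<lfloor>sqrt B\<rfloor>}"
  define c where "c = pi * l / (2 * m)"
  define u where "u = (\<lambda>j::nat. l * j / (2 * m))"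
  define F where "F = sqsum B b"
  define G where "G = sqsum B (\<lambda>n. b n * (sin (pi * real n ^ 2 * l) / real n ^ 2))"
  define cs where "cs = (\<lambda>n::nat. (pi * l / m) * (\<Sum>j<m. cos (pi * real n ^ 2 * l * j / m)))"
  define M where "M = (\<Sum>j<m. of_real c * (F (x + u j) + F (x - u j)))"
  have Fpm: "F (x + u j) + F (x - u j) = (\<Sum>n\<in>S. of_real (b n) * (2 * of_real (cos (pi * real n ^ 2 * l * j / m)) * echar (int (n^2)) x))" for j
  proof -
    have "F (x + u j) + F (x - u j) = (\<Sum>n\<in>S. of_real (b n) * (echar (int (n^2)) (x + u j) + echar (int (n^2)) (x - u j)))"
      unfolding F_def sqsum_def S_def by (simp add: sum.distrib[symmetric] ring_distribs)
    also have "\<dots> = (\<Sum>n\<in>S. of_real (b n) * (2 * of_real (cos (pi * real n ^ 2 * l * j / m)) * echar (int (n^2)) x))"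
    proof (rule sum.cong[OF refl])
      fix n
      have "2 * pi * real_of_int (int (n^2)) * u j = pi * real n ^ 2 * l * j / m"
        using assms by (simp add: u_def field_simps)
      then show "of_real (b n) * (echar (int (n^2)) (x + u j) + echar (int (n^2)) (x - u j)) =
          of_real (b n) * (2 * of_real (cos (pi * real n ^ 2 * l * j / m)) * echar (int (n^2)) x)"
        by (simp only: echar_shift)
    qed
    finally show ?thesis .
  qed
  have M_eq: "M = (\<Sum>n\<in>S. of_real (b n * cs n) * echar (int (n^2)) x)"
  proof -
    have "M = (\<Sum>j<m. \<Sum>n\<in>S. of_real c * (of_real (b n) * (2 * of_real (cos (pi * real n ^ 2 * l * j / m)) * echar (int (n^2)) x)))"
      unfolding M_def Fpm by (simp add: sum_distrib_left)
    also have "\<dots> = (\<Sum>n\<in>S. \<Sum>j<m. of_real c * (of_real (b n) * (2 * of_real (cos (pi * real n ^ 2 * l * j / m)) * echar (int (n^2)) x)))"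
      by (rule sum.swap)
    also have "\<dots> = (\<Sum>n\<in>S. of_real (b n * cs n) * echar (int (n^2)) x)"
    proof (rule sum.cong[OF refl])
      fix n
      have "(\<Sum>j<m. of_real c * (of_real (b n) * (2 * of_real (cos (pi * real n ^ 2 * l * j / m)) * echar (int (n^2)) x)))
          = of_real (b n * (2 * c) * (\<Sum>j<m. cos (pi * real n ^ 2 * l * j / m))) * echar (int (n^2)) x"
        by (simp add: sum_distrib_left sum_distrib_right mult_ac)
      also have "2 * c = pi * l / m" using assms by (simp add: c_def)
      finally show "(\<Sum>j<m. of_real c * (of_real (b n) * (2 * of_real (cos (pi * real n ^ 2 * l * j / m)) * echar (int (n^2)) x)))
          = of_real (b n * cs n) * echar (int (n^2)) x" by (simp add: cs_def mult_ac)
    qed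
    finally show ?thesis .
  qed
  have GM: "G x - M = (\<Sum>n\<in>S. of_real (b n * (sin (pi * real n ^ 2 * l) / real n ^ 2 - cs n)) * echar (int (n^2)) x)"
    unfolding G_def M_eq sqsum_def S_def by (simp add: sum_subtractf[symmetric] ring_distribs)
  have "cmod (G x - M) \<le> (\<Sum>n\<in>S. \<bar>b n\<bar> * \<bar>sin (pi * real n ^ 2 * l) / real n ^ 2 - cs n\<bar>)"
    unfolding GM by (rule order.trans[OF norm_sum], rule sum_mono, simp only: norm_mult norm_of_real norm_echar abs_mult mult_1_right order_refl)
  also have "\<dots> \<le> (\<Sum>n\<in>S. \<bar>b n\<bar> * (pi^2 * l^2 * real n ^ 2 / m))"
    by (rule sum_mono, rule mult_left_mono) (use sum_bound_E[OF assms] in \<open>auto simp: S_def cs_def\<close>)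
  also have "\<dots> = pi^2 * l^2 * (\<Sum>n\<in>S. \<bar>b n\<bar> * real n ^ 2) / m"
    by (simp add: sum_distrib_left sum_divide_distrib mult_ac)
  finally have E: "cmod (G x - M) \<le> pi^2 * l^2 * (\<Sum>n\<in>S. \<bar>b n\<bar> * real n ^ 2) / m" .
  have c0: "c \<ge> 0" using assms by (simp add: c_def)
  have "cmod M \<le> (\<Sum>j<m. cmod (of_real c * (F (x + u j) + F (x - u j))))"
    unfolding M_def by (rule norm_sum)
  also have "\<dots> \<le> (\<Sum>j<m. c * cmod (F (x + u j)) + c * cmod (F (x - u j)))"
    by (rule sum_mono) (use c0 in \<open>auto simp: norm_mult ring_distribs[symmetric] intro!: mult_left_mono norm_triangle_ineq\<close>)
  finally have Mb: "cmod M \<le> (\<Sum>j<m. c * cmod (F (x + u j)) + c * cmod (F (x - u j)))" .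
  have "cmod (G x) \<le> cmod M + cmod (G x - M)" by (rule norm_triangle_sub)
  also have "\<dots> \<le> (\<Sum>j<m. c * cmod (F (x + u j)) + c * cmod (F (x - u j))) + pi^2 * l^2 * (\<Sum>n\<in>S. \<bar>b n\<bar> * real n ^ 2) / m"
    using Mb E by linarith
  finally show ?thesis unfolding G_def F_def c_def u_def S_def .
qed


lemma Nr_shift_minus:
  assumes "p > 0"
  shows "Nr p (\<lambda>x. cmod (sqsum B b (x - v))) = Nr p (\<lambda>x. cmod (sqsum B b x))"
  using Nr_shift[OF assms, of B b "-v"] by simp

lemma main_bound:
  fixes b :: "nat \<Rightarrow> real" and l p B :: real
  assumes "l > 0" "p \<ge> 1"
  shows "Lp_norm_T p (sqsum B (\<lambda>n. b n * (sin (pi * real n ^ 2 * l) / real n ^ 2))) \<le> pi * l * Lp_norm_T p (sqsum B b)"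
proof -
  have p0: "p > 0" using assms by simp
  define K where "K = (\<Sum>n\<in>{1..nat \<lfloor>sqrt B\<rfloor>}. \<bar>b n\<bar> * real n ^ 2)"
  have K0: "K \<ge> 0" unfolding K_def by (intro sum_nonneg) auto
  define F where "F = sqsum B b"
  define G where "G = sqsum B (\<lambda>n. b n * (sin (pi * real n ^ 2 * l) / real n ^ 2))"
  have LG: "Lp_norm_T p G = Nr p (\<lambda>x. cmod (G x))"
    by (rule Lp_Nr) (use p0 in \<open>auto simp: G_def intro!: continuous_intros\<close>)
  have LF: "Lp_norm_T p F = Nr p (\<lambda>x. cmod (F x))"
    by (rule Lp_Nr) (use p0 in \<open>auto simp: F_def intro!: continuous_intros\<close>)
  have "Nr p (\<lambda>x. cmod (G x)) \<le> pi * l * Nr p (\<lambda>x. cmod (F x))"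
  proof (rule field_le_epsilon)
    fix e :: real assume e: "e > 0"
    obtain N :: nat where N: "pi^2 * l^2 * K / e < real N" using reals_Archimedean2 by blast
    define m where "m = Suc N"
    have m0: "m > 0" by (simp add: m_def)
    define E where "E = pi^2 * l^2 * K / m"
    have E0: "E \<ge> 0" using K0 by (simp add: E_def)
    have Ee: "E < e"
    proof -
      have "pi^2 * l^2 * K < e * real N" using N e by (simp add: divide_less_eq mult.commute)
      also have "\<dots> \<le> e * m" using e by (simp add: m_def)
      finally show ?thesis using m0 by (simp add: E_def divide_less_eq mult.commute)
    qed
    define c where "c = pi * l / (2 * m)"
    have c0: "c \<ge> 0" using assms by (simp add: c_def)
    define u where "u = (\<lambda>j::nat. l * j / (2 * m))"
    define f where "f = (\<lambda>j x. c * cmod (F (x + u j)) + c * cmod (F (x - u j)))"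
    have fc: "continuous_on {0..1} (f j)" for j unfolding f_def F_def by (intro continuous_intros)
    have f0: "f j x \<ge> 0" for j x unfolding f_def using c0 by simp
    have "Nr p (\<lambda>x. cmod (G x)) \<le> Nr p (\<lambda>x. (\<Sum>j<m. f j x) + E)"
    proof (rule Nr_mono)
      show "continuous_on {0..1} (\<lambda>x. cmod (G x))" unfolding G_def by (intro continuous_intros)
      show "continuous_on {0..1} (\<lambda>x. (\<Sum>j<m. f j x) + E)" using fc by (intro continuous_intros) auto
      show "(\<Sum>j<m. f j x) + E \<ge> 0" for x using f0 E0 by (simp add: sum_nonneg)
      show "cmod (G x) \<le> (\<Sum>j<m. f j x) + E" if "x \<in> {0..1}" for x
        using pointwise[OF assms(1) m0, of B b x] unfolding f_def G_def F_def c_def u_def E_def K_def .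
    qed (use p0 in auto)
    also have "\<dots> \<le> Nr p (\<lambda>x. \<Sum>j<m. f j x) + Nr p (\<lambda>x. E)"
      by (rule Nr_minkowski) (use fc f0 E0 assms in \<open>auto intro!: continuous_intros sum_nonneg\<close>)
    also have "Nr p (\<lambda>x. E) = E" by (rule Nr_const[OF E0 p0])
    also have "Nr p (\<lambda>x. \<Sum>j<m. f j x) \<le> (\<Sum>j<m. Nr p (f j))"
      by (rule Nr_sum) (use fc f0 assms in auto)
    also have "\<dots> \<le> (\<Sum>j<m. 2 * c * Nr p (\<lambda>x. cmod (F x)))"
    proof (rule sum_mono)
      fix j
      have "Nr p (f j) \<le> Nr p (\<lambda>x. c * cmod (F (x + u j))) + Nr p (\<lambda>x. c * cmod (F (x - u j)))"
        unfolding f_def by (rule Nr_minkowski) (use c0 assms in \<open>auto simp: F_def intro!: continuous_intros\<close>)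
      also have "Nr p (\<lambda>x. c * cmod (F (x + u j))) = c * Nr p (\<lambda>x. cmod (F (x + u j)))"
        by (rule Nr_scale) (use c0 p0 in \<open>auto simp: F_def intro!: continuous_intros\<close>)
      also have "Nr p (\<lambda>x. c * cmod (F (x - u j))) = c * Nr p (\<lambda>x. cmod (F (x - u j)))"
        by (rule Nr_scale) (use c0 p0 in \<open>auto simp: F_def intro!: continuous_intros\<close>)
      also have "Nr p (\<lambda>x. cmod (F (x + u j))) = Nr p (\<lambda>x. cmod (F x))"
        unfolding F_def by (rule Nr_shift[OF p0])
      also have "Nr p (\<lambda>x. cmod (F (x - u j))) = Nr p (\<lambda>x. cmod (F x))"
        unfolding F_def by (rule Nr_shift_minus[OF p0])
      finally show "Nr p (f j) \<le> 2 * c * Nr p (\<lambda>x. cmod (F x))" by simp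
    qed
    also have "\<dots> = pi * l * Nr p (\<lambda>x. cmod (F x))"
      using m0 by (simp add: c_def)
    finally show "Nr p (\<lambda>x. cmod (G x)) \<le> pi * l * Nr p (\<lambda>x. cmod (F x)) + e"
      using Ee by linarith
  qed
  then show ?thesis using LG LF unfolding F_def G_def by simp
qed


lemma sqsum_cong:
  assumes "\<And>n. n \<ge> 1 \<Longrightarrow> a n = a' n"
  shows "sqsum B a = sqsum B a'"
  unfolding sqsum_def using assms by (intro ext sum.cong) auto

lemma coeff1:
  assumes "n \<ge> (1::nat)"
  shows "real n powr (2 * (1 - s)) * (y / real n ^ 2) = y / real n powr (2 * s)"
proof -
  have n0: "real n > 0" using assms by simp
  have a: "2 * (1 - s) = 2 - 2 * s" by simp
  have "real n powr (2 * (1 - s)) = real n powr 2 / real n powr (2 * s)"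
    unfolding a by (rule powr_diff)
  also have "real n powr 2 = real n ^ 2" using n0 by (simp add: powr_numeral)
  finally have b: "real n powr (2 * (1 - s)) = real n ^ 2 / real n powr (2 * s)" .
  show ?thesis unfolding b using n0 by (simp add: field_simps)
qed

lemma coeff2:
  assumes "n \<ge> (1::nat)"
  shows "1 / real n powr (2 * (s - 1)) * (y / real n ^ 2) = y / real n powr (2 * s)"
proof -
  have n0: "real n > 0" using assms by simp
  have "1 / real n powr (2 * (s - 1)) = real n powr (2 * (1 - s))"
    using n0 by (simp add: powr_minus_divide[symmetric] algebra_simps)
  then show ?thesis using coeff1[OF assms] by simp
qed

theorem lemma3p3:
  shows
  "(\<forall>s::real. s \<le> 1 \<longrightarrow>
     (\<exists>C>0. \<forall>p l B::real. 1 \<le> p \<and> 0 < l \<and> l < 1/2 \<and> 1 \<le> B \<longrightarrow>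
        Lp_norm_T p (sqsum B (\<lambda>n. sin (pi * real n ^ 2 * l) / real n powr (2 * s)))
        \<le> C * (l * Lp_norm_T p (sqsum B (\<lambda>n. real n powr (2 * (1 - s))))
               + B powr (3 - s) * l ^ 3 * cosh (2 * pi * B * l) * Lp_norm_T p (sqsum B (\<lambda>n. 1)))))
   \<and>
   (\<exists>C>0. \<forall>s p l B::real. 1 < s \<and> s \<le> 3 \<and> 1 \<le> p \<and> 0 < l \<and> l < 1/2 \<and> 1 \<le> B \<longrightarrow>
        Lp_norm_T p (sqsum B (\<lambda>n. sin (pi * real n ^ 2 * l) / real n powr (2 * s)))
        \<le> C * (l * Lp_norm_T p (sqsum B (\<lambda>n. 1 / real n powr (2 * (s - 1))))
               + l ^ 3 * Lp_norm_T p (sqsum B (\<lambda>n. real n powr (2 * (3 - s))))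
               + B powr (5 - s) * l ^ 5 * cosh (2 * pi * l * B) * Lp_norm_T p (sqsum B (\<lambda>n. 1))))"
proof (intro conjI allI impI)
  fix s :: real assume "s \<le> 1"
  show "\<exists>C>0. \<forall>p l B::real. 1 \<le> p \<and> 0 < l \<and> l < 1/2 \<and> 1 \<le> B \<longrightarrow>
        Lp_norm_T p (sqsum B (\<lambda>n. sin (pi * real n ^ 2 * l) / real n powr (2 * s)))
        \<le> C * (l * Lp_norm_T p (sqsum B (\<lambda>n. real n powr (2 * (1 - s))))
               + B powr (3 - s) * l ^ 3 * cosh (2 * pi * B * l) * Lp_norm_T p (sqsum B (\<lambda>n. 1)))"
  proof (intro exI[of _ pi] conjI allI impI)
    fix p l B :: real assume H: "1 \<le> p \<and> 0 < l \<and> l < 1/2 \<and> 1 \<le> B"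
    have eq: "sqsum B (\<lambda>n. sin (pi * real n ^ 2 * l) / real n powr (2 * s))
        = sqsum B (\<lambda>n. real n powr (2 * (1 - s)) * (sin (pi * real n ^ 2 * l) / real n ^ 2))"
      by (rule sqsum_cong, rule coeff1[symmetric])
    have nn: "0 \<le> B powr (3 - s) * l ^ 3 * cosh (2 * pi * B * l) * Lp_norm_T p (sqsum B (\<lambda>n. 1))"
      using H by (intro mult_nonneg_nonneg) (auto simp: Lp_norm_T_def intro: less_imp_le)
    have "Lp_norm_T p (sqsum B (\<lambda>n. sin (pi * real n ^ 2 * l) / real n powr (2 * s)))
        \<le> pi * (l * Lp_norm_T p (sqsum B (\<lambda>n. real n powr (2 * (1 - s)))))"
      unfolding eq using main_bound[where l=l and p=p and b="\<lambda>n. real n powr (2 * (1 - s))" and B=B] H by simp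
    also have "\<dots> \<le> pi * (l * Lp_norm_T p (sqsum B (\<lambda>n. real n powr (2 * (1 - s))))
               + B powr (3 - s) * l ^ 3 * cosh (2 * pi * B * l) * Lp_norm_T p (sqsum B (\<lambda>n. 1)))"
      using nn by (intro mult_left_mono) auto
    finally show "Lp_norm_T p (sqsum B (\<lambda>n. sin (pi * real n ^ 2 * l) / real n powr (2 * s)))
        \<le> pi * (l * Lp_norm_T p (sqsum B (\<lambda>n. real n powr (2 * (1 - s))))
               + B powr (3 - s) * l ^ 3 * cosh (2 * pi * B * l) * Lp_norm_T p (sqsum B (\<lambda>n. 1)))" .
  qed simp
next
  show "\<exists>C>0. \<forall>s p l B::real. 1 < s \<and> s \<le> 3 \<and> 1 \<le> p \<and> 0 < l \<and> l < 1/2 \<and> 1 \<le> B \<longrightarrow>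
        Lp_norm_T p (sqsum B (\<lambda>n. sin (pi * real n ^ 2 * l) / real n powr (2 * s)))
        \<le> C * (l * Lp_norm_T p (sqsum B (\<lambda>n. 1 / real n powr (2 * (s - 1))))
               + l ^ 3 * Lp_norm_T p (sqsum B (\<lambda>n. real n powr (2 * (3 - s))))
               + B powr (5 - s) * l ^ 5 * cosh (2 * pi * l * B) * Lp_norm_T p (sqsum B (\<lambda>n. 1)))"
  proof (intro exI[of _ pi] conjI allI impI)
    fix s p l B :: real assume H: "1 < s \<and> s \<le> 3 \<and> 1 \<le> p \<and> 0 < l \<and> l < 1/2 \<and> 1 \<le> B"
    have eq: "sqsum B (\<lambda>n. sin (pi * real n ^ 2 * l) / real n powr (2 * s))
        = sqsum B (\<lambda>n. 1 / real n powr (2 * (s - 1)) * (sin (pi * real n ^ 2 * l) / real n ^ 2))"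
      by (rule sqsum_cong, rule coeff2[symmetric])
    have nn1: "0 \<le> l ^ 3 * Lp_norm_T p (sqsum B (\<lambda>n. real n powr (2 * (3 - s))))"
      using H by (intro mult_nonneg_nonneg) (auto simp: Lp_norm_T_def)
    have nn2: "0 \<le> B powr (5 - s) * l ^ 5 * cosh (2 * pi * l * B) * Lp_norm_T p (sqsum B (\<lambda>n. 1))"
      using H by (intro mult_nonneg_nonneg) (auto simp: Lp_norm_T_def intro: less_imp_le)
    have "Lp_norm_T p (sqsum B (\<lambda>n. sin (pi * real n ^ 2 * l) / real n powr (2 * s)))
        \<le> pi * (l * Lp_norm_T p (sqsum B (\<lambda>n. 1 / real n powr (2 * (s - 1)))))"
      unfolding eq using main_bound[where l=l and p=p and b="\<lambda>n. 1 / real n powr (2 * (s - 1))" and B=B] H by simp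
    also have "\<dots> \<le> pi * (l * Lp_norm_T p (sqsum B (\<lambda>n. 1 / real n powr (2 * (s - 1))))
               + l ^ 3 * Lp_norm_T p (sqsum B (\<lambda>n. real n powr (2 * (3 - s))))
               + B powr (5 - s) * l ^ 5 * cosh (2 * pi * l * B) * Lp_norm_T p (sqsum B (\<lambda>n. 1)))"
      using nn1 nn2 by (intro mult_left_mono) auto
    finally show "Lp_norm_T p (sqsum B (\<lambda>n. sin (pi * real n ^ 2 * l) / real n powr (2 * s)))
        \<le> pi * (l * Lp_norm_T p (sqsum B (\<lambda>n. 1 / real n powr (2 * (s - 1))))
               + l ^ 3 * Lp_norm_T p (sqsum B (\<lambda>n. real n powr (2 * (3 - s))))
               + B powr (5 - s) * l ^ 5 * cosh (2 * pi * l * B) * Lp_norm_T p (sqsum B (\<lambda>n. 1)))" .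
  qed simp
qed

end
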